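(* For every integer $n\ge0$, $$7J\mathcal{G}_{n}^{(3)}+K\mathcal{G}_{n}^{(3)}=3\cdot2^{n}\Theta+X_{n}(\mathbf{A}+\mathbf{C})-X_{n+1}(\mathbf{B}+\mathbf{D})$$ and $$7J\mathcal{G}_{n}^{(3)}-K\mathcal{G}_{n}^{(3)}=2^{n}\Theta+X_{n}(\mathbf{A}-\mathbf{C})-X_{n+1}(\mathbf{B}-\mathbf{D}),$$ where $\Theta=1+2\mathbf{e}_1+4\mathbf{e}_2+8\mathbf{e}_3$, $\mathbf{A}=1+2\mathbf{e}_1-3\mathbf{e}_2+\mathbf{e}_3$, $\mathbf{B}=2-3\mathbf{e}_1+\mathbf{e}_2+2\mathbf{e}_3$, $\mathbf{C}=1-2\mathbf{e}_1+\mathbf{e}_2+\mathbf{e}_3$, $\mathbf{D}=-2+\mathbf{e}_1+\mathbf{e}_2-2\mathbf{e}_3$.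
   Context: Fix real numbers $\lambda_1,\lambda_2,\lambda_3$. The algebra $\mathbb{H}_{\lambda_1,\lambda_2,\lambda_3}$ of 3-parameter generalized quaternions is the real associative algebra of elements $\psi_0+\psi_1\mathbf{e}_1+\psi_2\mathbf{e}_2+\psi_3\mathbf{e}_3$ ($\psi_i\in\mathbb{R}$) with $\mathbf{e}_1^2=-\lambda_1\lambda_2$, $\mathbf{e}_2^2=-\lambda_1\lambda_3$, $\mathbf{e}_3^2=-\lambda_2\lambda_3$, $\mathbf{e}_1\mathbf{e}_2=-\mathbf{e}_2\mathbf{e}_1=\lambda_1\mathbf{e}_3$, $\mathbf{e}_1\mathbf{e}_3=-\mathbf{e}_3\mathbf{e}_1=-\lambda_2\mathbf{e}_2$, $\mathbf{e}_2\mathbf{e}_3=-\mathbf{e}_3\mathbf{e}_2=\lambda_3\mathbf{e}_1$. The third-order Jacobsthal numbers are $J_0^{(3)}=0$, $J_1^{(3)}=J_2^{(3)}=1$, $J_n^{(3)}=J_{n-1}^{(3)}+J_{n-2}^{(3)}+2J_{n-3}^{(3)}$ for $n\ge3$; the modified third-order Jacobsthal numbers are $K_0^{(3)}=3$, $K_1^{(3)}=1$, $K_2^{(3)}=3$, $K_n^{(3)}=K_{n-1}^{(3)}+K_{n-2}^{(3)}+2K_{n-3}^{(3)}$ for $n\ge3$. For $n\ge0$ define $J\mathcal{G}_n^{(3)}=J_n^{(3)}+J_{n+1}^{(3)}\mathbf{e}_1+J_{n+2}^{(3)}\mathbf{e}_2+J_{n+3}^{(3)}\mathbf{e}_3$ and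 $K\mathcal{G}_n^{(3)}=K_n^{(3)}+K_{n+1}^{(3)}\mathbf{e}_1+K_{n+2}^{(3)}\mathbf{e}_2+K_{n+3}^{(3)}\mathbf{e}_3$. The integer sequence $X_n$ is defined by $X_n=0,1,-1$ according as $n\equiv0,1,2\pmod 3$. *)

theory Defs
  imports Main Complex_Main
begin

text \<open>Elements psi0 + psi1 e1 + psi2 e2 + psi3 e3 of the 3-parameter generalized
quaternions, stored by their four real coordinates.\<close>

datatype gq = GQ real real real real

fun gq_add :: "gq \<Rightarrow> gq \<Rightarrow> gq" where
  "gq_add (GQ a0 a1 a2 a3) (GQ b0 b1 b2 b3) = GQ (a0+b0) (a1+b1) (a2+b2) (a3+b3)"

fun gq_sub :: "gq \<Rightarrow> gq \<Rightarrow> gq" where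
  "gq_sub (GQ a0 a1 a2 a3) (GQ b0 b1 b2 b3) = GQ (a0-b0) (a1-b1) (a2-b2) (a3-b3)"

fun gq_scale :: "real \<Rightarrow> gq \<Rightarrow> gq" where
  "gq_scale c (GQ a0 a1 a2 a3) = GQ (c*a0) (c*a1) (c*a2) (c*a3)"

text \<open>Multiplication of H_{l1,l2,l3} (bilinear extension of the basis table).\<close>
fun gq_mult :: "real \<Rightarrow> real \<Rightarrow> real \<Rightarrow> gq \<Rightarrow> gq \<Rightarrow> gq" where
  "gq_mult l1 l2 l3 (GQ a0 a1 a2 a3) (GQ b0 b1 b2 b3) =
     GQ (a0*b0 - l1*l2*a1*b1 - l1*l3*a2*b2 - l2*l3*a3*b3)
        (a0*b1 + a1*b0 + l3*(a2*b3 - a3*b2))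
        (a0*b2 + a2*b0 - l2*(a1*b3 - a3*b1))
        (a0*b3 + a3*b0 + l1*(a1*b2 - a2*b1))"

definition gq_one :: gq where "gq_one = GQ 1 0 0 0"
definition gq_e1 :: gq where "gq_e1 = GQ 0 1 0 0"
definition gq_e2 :: gq where "gq_e2 = GQ 0 0 1 0"
definition gq_e3 :: gq where "gq_e3 = GQ 0 0 0 1"

definition gq_mk :: "real \<Rightarrow> real \<Rightarrow> real \<Rightarrow> real \<Rightarrow> gq" where
  "gq_mk x0 x1 x2 x3 =
     gq_add (gq_add (gq_add (gq_scale x0 gq_one) (gq_scale x1 gq_e1)) (gq_scale x2 gq_e2))
            (gq_scale x3 gq_e3)"

fun jac3 :: "nat \<Rightarrow> int" where
  "jac3 0 = 0"
| "jac3 (Suc 0) = 1"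
| "jac3 (Suc (Suc 0)) = 1"
| "jac3 (Suc (Suc (Suc n))) = jac3 (Suc (Suc n)) + jac3 (Suc n) + 2 * jac3 n"

fun kjac3 :: "nat \<Rightarrow> int" where
  "kjac3 0 = 3"
| "kjac3 (Suc 0) = 1"
| "kjac3 (Suc (Suc 0)) = 3"
| "kjac3 (Suc (Suc (Suc n))) = kjac3 (Suc (Suc n)) + kjac3 (Suc n) + 2 * kjac3 n"

definition JG3 :: "nat \<Rightarrow> gq" where
  "JG3 n = gq_mk (jac3 n) (jac3 (n+1)) (jac3 (n+2)) (jac3 (n+3))"

definition KG3 :: "nat \<Rightarrow> gq" where
  "KG3 n = gq_mk (kjac3 n) (kjac3 (n+1)) (kjac3 (n+2)) (kjac3 (n+3))"

definition Xseq :: "nat \<Rightarrow> int" where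
  "Xseq n = (if n mod 3 = 0 then 0 else if n mod 3 = 1 then 1 else -1)"

end

theory Submission
  imports Defs
begin

lemma X3: "Xseq (Suc (Suc (Suc n))) = Xseq n" unfolding Xseq_def by auto
lemma X2: "Xseq (n+2) = - Xseq n - Xseq (n+1)" unfolding Xseq_def by (auto, presburger+)

lemma jk: "7 * jac3 n = 2^(n+1) + Xseq n - 2 * Xseq (n+1) \<and> kjac3 n = 2^n + Xseq n + 2 * Xseq (n+1)"
proof (induction n rule: jac3.induct)
  case 1 then show ?case by (simp add: Xseq_def)
next
  case 2 then show ?case by (simp add: Xseq_def)
next
  case 3 then show ?case by (simp add: Xseq_def)
next
  case (4 n)
  have a: "Xseq (Suc (Suc (Suc n))) = Xseq n" using X3[of n] by simp
  have b: "Xseq (Suc (Suc n)) = - Xseq n - Xseq (Suc n)" using X2[of n] by simp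
  have c: "Xseq (Suc (Suc (Suc (Suc n)))) = Xseq (Suc n)" using X3[of "Suc n"] by simp
  show ?case using 4 a b c by (simp add: algebra_simps)
qed

theorem theorem4p4:
  fixes n :: nat
  defines "Theta \<equiv> gq_mk 1 2 4 8"
      and "A \<equiv> gq_mk 1 2 (-3) 1"
      and "B \<equiv> gq_mk 2 (-3) 1 2"
      and "C \<equiv> gq_mk 1 (-2) 1 1"
      and "D \<equiv> gq_mk (-2) 1 1 (-2)"
  shows "gq_add (gq_scale 7 (JG3 n)) (KG3 n) =
           gq_sub (gq_add (gq_scale (3 * 2 ^ n) Theta) (gq_scale (Xseq n) (gq_add A C)))
                  (gq_scale (Xseq (n+1)) (gq_add B D)) \<and>
         gq_sub (gq_scale 7 (JG3 n)) (KG3 n) =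
           gq_sub (gq_add (gq_scale (2 ^ n) Theta) (gq_scale (Xseq n) (gq_sub A C)))
                  (gq_scale (Xseq (n+1)) (gq_sub B D))"
proof -
  have j: "\<And>m. 7 * real_of_int (jac3 m) = 2^(m+1) + Xseq m - 2 * Xseq (m+1)"
    using jk by (metis (no_types, opaque_lifting) of_int_add of_int_diff of_int_mult of_int_numeral of_int_power)
  have k: "\<And>m. real_of_int (kjac3 m) = 2^m + Xseq m + 2 * Xseq (m+1)"
    using jk by (metis (no_types, opaque_lifting) of_int_add of_int_mult of_int_numeral of_int_power)
  define a :: real where "a = 2^n"
  define x0 :: real where "x0 = Xseq n"
  define x1 :: real where "x1 = Xseq (Suc n)"
  have e2: "Xseq (Suc (Suc n)) = - x0 - x1" using X2[of n] unfolding x0_def x1_def by simp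
  have e3: "Xseq (Suc (Suc (Suc n))) = x0" using X3[of n] unfolding x0_def by simp
  have e4: "Xseq (Suc (Suc (Suc (Suc n)))) = x1" using X3[of "Suc n"] unfolding x1_def by simp
  have p: "(2::real)^(Suc n) = 2*a" "(2::real)^(Suc (Suc n)) = 4*a" "(2::real)^(Suc (Suc (Suc n))) = 8*a"
     "(2::real)^(Suc (Suc (Suc (Suc n)))) = 16*a" unfolding a_def by simp_all
  have J0: "7 * real_of_int (jac3 n) = 2*a + x0 - 2*x1" using j[of n] p unfolding x0_def x1_def by simp
  have J1: "7 * real_of_int (jac3 (n+1)) = 4*a + x1 - 2*(-x0-x1)" using j[of "Suc n"] p e2 unfolding x1_def by simp
  have J2: "7 * real_of_int (jac3 (n+2)) = 8*a + (-x0-x1) - 2*x0" using j[of "Suc (Suc n)"] p e2 e3 by (simp add: numeral_eq_Suc)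
  have J3: "7 * real_of_int (jac3 (n+3)) = 16*a + x0 - 2*x1" using j[of "Suc (Suc (Suc n))"] p e3 e4 by (simp add: numeral_eq_Suc)
  have K0: "real_of_int (kjac3 n) = a + x0 + 2*x1" using k[of n] p unfolding a_def x0_def x1_def by simp
  have K1: "real_of_int (kjac3 (n+1)) = 2*a + x1 + 2*(-x0-x1)" using k[of "Suc n"] p e2 unfolding x1_def by simp
  have K2: "real_of_int (kjac3 (n+2)) = 4*a + (-x0-x1) + 2*x0" using k[of "Suc (Suc n)"] p e2 e3 by (simp add: numeral_eq_Suc)
  have K3: "real_of_int (kjac3 (n+3)) = 8*a + x0 + 2*x1" using k[of "Suc (Suc (Suc n))"] p e3 e4 by (simp add: numeral_eq_Suc)
  have X1: "real_of_int (Xseq (n+1)) = x1" unfolding x1_def by simp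
  show ?thesis
    unfolding assms JG3_def KG3_def gq_mk_def gq_one_def gq_e1_def gq_e2_def gq_e3_def
    by (simp add: X1 J0 J1 J2 J3 K0 K1 K2 K3 flip: a_def x0_def x1_def, insert J0 J1 J2 J3 K0 K1 K2 K3, simp add: algebra_simps)
qed

end
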